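(* Let $x$ be a left-computable number that is nearly computable. Then $x$ is regainingly approximable if and only if $x$ is speedable.
   Context: A real number is left-computable if there is a computable non-decreasing sequence of rationals converging to it. A real $x$ is regainingly approximable if there is a computable non-decreasing sequence of rationals $(x_n)_n$ converging to $x$ with $x - x_n < 2^{-n}$ for infinitely many $n\in\mathbb{N}$. A left-computable $x$ is speedable if there exist $\rho\in(0,1)$ and a computable strictly increasing sequence of rationals $(x_n)_n$ converging to $x$ such that $\frac{x-x_{n+1}}{x-x_n}\le\rho$ for infinitely many $n$. A function $f:\mathbb{N}\to\mathbb{N}$ is a modulus of convergence of a convergent sequence $(y_n)_n$ with limit $y$ if for all $n$ and all $m\ge f(n)$ we have $|y-y_m|<2^{-n}$; $(y_n)_n$ converges computably if it has a computable modulus of convergence. A sequence $(x_n)_n$ converges nearly computably if it converges and for every computable increasing function $s:\mathbb{N}\to\mathbb{N}$ the sequence $(x_{s(n+1)}-x_{s(n)})_n$ converges computably to $0$. A real is nearly computable if some computable sequence of rationals converges nearly computably to it. *)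

theory Defs
  imports Complex_Main
begin

datatype recf = Zero | Succ | Proj nat | Comp recf "recf list" | Prim recf recf | Mn recf

inductive eval_rf :: "recf \<Rightarrow> nat list \<Rightarrow> nat \<Rightarrow> bool" where
  zero: "eval_rf Zero xs 0"
| succ: "eval_rf Succ (x # xs) (Suc x)"
| proj: "i < length xs \<Longrightarrow> eval_rf (Proj i) xs (xs ! i)"
| comp: "length ys = length gs \<Longrightarrow> (\<forall>i < length gs. eval_rf (gs ! i) xs (ys ! i))
          \<Longrightarrow> eval_rf f ys z \<Longrightarrow> eval_rf (Comp f gs) xs z"
| prim0: "eval_rf f xs y \<Longrightarrow> eval_rf (Prim f g) (0 # xs) y"
| primS: "eval_rf (Prim f g) (n # xs) y \<Longrightarrow> eval_rf g (n # y # xs) z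
          \<Longrightarrow> eval_rf (Prim f g) (Suc n # xs) z"
| mn: "eval_rf f (n # xs) 0 \<Longrightarrow> (\<forall>m < n. \<exists>y. eval_rf f (m # xs) y \<and> 0 < y)
          \<Longrightarrow> eval_rf (Mn f) xs n"

definition computable_nat :: "(nat \<Rightarrow> nat) \<Rightarrow> bool" where
  "computable_nat f \<longleftrightarrow> (\<exists>r. \<forall>n. eval_rf r [n] (f n))"

definition computable_rat_seq :: "(nat \<Rightarrow> rat) \<Rightarrow> bool" where
  "computable_rat_seq q \<longleftrightarrow> (\<exists>a b c. computable_nat a \<and> computable_nat b \<and> computable_nat c \<and>
      (\<forall>n. q n = (of_nat (a n) - of_nat (b n)) / of_nat (Suc (c n))))"

definition left_computable :: "real \<Rightarrow> bool" where
  "left_computable x \<longleftrightarrow> (\<exists>q. computable_rat_seq q \<and> mono q \<and>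
      (\<lambda>n. real_of_rat (q n)) \<longlonglongrightarrow> x)"

definition regainingly_approximable :: "real \<Rightarrow> bool" where
  "regainingly_approximable x \<longleftrightarrow> (\<exists>q. computable_rat_seq q \<and> mono q \<and>
      (\<lambda>n. real_of_rat (q n)) \<longlonglongrightarrow> x \<and>
      infinite {n. x - real_of_rat (q n) < 1 / 2 ^ n})"

definition speedable :: "real \<Rightarrow> bool" where
  "speedable x \<longleftrightarrow> left_computable x \<and>
     (\<exists>\<rho>::real. 0 < \<rho> \<and> \<rho> < 1 \<and> (\<exists>q. computable_rat_seq q \<and> strict_mono q \<and>
        (\<lambda>n. real_of_rat (q n)) \<longlonglongrightarrow> x \<and>
        infinite {n. (x - real_of_rat (q (Suc n))) / (x - real_of_rat (q n)) \<le> \<rho>}))"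

definition is_modulus :: "(nat \<Rightarrow> nat) \<Rightarrow> (nat \<Rightarrow> real) \<Rightarrow> real \<Rightarrow> bool" where
  "is_modulus f y L \<longleftrightarrow> (\<forall>n. \<forall>m \<ge> f n. \<bar>L - y m\<bar> < 1 / 2 ^ n)"

definition converges_computably_to :: "(nat \<Rightarrow> real) \<Rightarrow> real \<Rightarrow> bool" where
  "converges_computably_to y L \<longleftrightarrow> y \<longlonglongrightarrow> L \<and> (\<exists>f. computable_nat f \<and> is_modulus f y L)"

definition converges_nearly_computably :: "(nat \<Rightarrow> real) \<Rightarrow> bool" where
  "converges_nearly_computably y \<longleftrightarrow> convergent y \<and>
     (\<forall>s. computable_nat s \<and> strict_mono s \<longrightarrow>
        converges_computably_to (\<lambda>n. y (s (Suc n)) - y (s n)) 0)"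

definition nearly_computable :: "real \<Rightarrow> bool" where
  "nearly_computable x \<longleftrightarrow> (\<exists>q. computable_rat_seq q \<and>
      converges_nearly_computably (\<lambda>n. real_of_rat (q n)) \<and>
      (\<lambda>n. real_of_rat (q n)) \<longlonglongrightarrow> x)"

end

theory Submission
  imports Defs
begin

definition recfn :: "nat \<Rightarrow> (nat list \<Rightarrow> nat) \<Rightarrow> bool" where
  "recfn k F \<longleftrightarrow> (\<exists>r. \<forall>xs. length xs = k \<longrightarrow> eval_rf r xs (F xs))"

lemma recfn_cong:
  assumes "recfn k F" "\<And>xs. length xs = k \<Longrightarrow> F xs = G xs"
  shows "recfn k G"
  using assms unfolding recfn_def by metis

lemma recfn_zero: "recfn k (\<lambda>_. 0)"
  unfolding recfn_def by (auto intro: eval_rf.zero)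

lemma recfn_proj: "i < k \<Longrightarrow> recfn k (\<lambda>xs. xs ! i)"
  unfolding recfn_def by (auto intro!: exI[of _ "Proj i"] eval_rf.proj)

lemma recfn_succ: "recfn k G \<Longrightarrow> recfn k (\<lambda>xs. Suc (G xs))"
proof -
  assume "recfn k G"
  then obtain r where r: "\<forall>xs. length xs = k \<longrightarrow> eval_rf r xs (G xs)" unfolding recfn_def by blast
  show ?thesis unfolding recfn_def
  proof (intro exI[of _ "Comp Succ [r]"] allI impI)
    fix xs :: "nat list" assume "length xs = k"
    then show "eval_rf (Comp Succ [r]) xs (Suc (G xs))"
      using r by (intro eval_rf.comp[where ys = "[G xs]"]) (auto intro: eval_rf.succ)
  qed
qed

lemma recfn_const: "recfn k (\<lambda>_. c)"
proof (induction c)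
  case 0 then show ?case by (rule recfn_zero)
next
  case (Suc c) then show ?case by (rule recfn_succ)
qed

lemma recfn_comp1:
  assumes "recfn 1 F" "recfn k G"
  shows "recfn k (\<lambda>xs. F [G xs])"
proof -
  obtain rf where rf: "\<forall>xs. length xs = 1 \<longrightarrow> eval_rf rf xs (F xs)" using assms(1) unfolding recfn_def by blast
  obtain r where r: "\<forall>xs. length xs = k \<longrightarrow> eval_rf r xs (G xs)" using assms(2) unfolding recfn_def by blast
  show ?thesis unfolding recfn_def
  proof (intro exI[of _ "Comp rf [r]"] allI impI)
    fix xs :: "nat list" assume "length xs = k"
    then show "eval_rf (Comp rf [r]) xs (F [G xs])"
      using r rf by (intro eval_rf.comp[where ys = "[G xs]"]) auto
  qed
qed

lemma recfn_comp2:
  assumes "recfn 2 F" "recfn k G1" "recfn k G2"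
  shows "recfn k (\<lambda>xs. F [G1 xs, G2 xs])"
proof -
  obtain rf where rf: "\<forall>xs. length xs = 2 \<longrightarrow> eval_rf rf xs (F xs)" using assms(1) unfolding recfn_def by blast
  obtain r1 where r1: "\<forall>xs. length xs = k \<longrightarrow> eval_rf r1 xs (G1 xs)" using assms(2) unfolding recfn_def by blast
  obtain r2 where r2: "\<forall>xs. length xs = k \<longrightarrow> eval_rf r2 xs (G2 xs)" using assms(3) unfolding recfn_def by blast
  show ?thesis unfolding recfn_def
  proof (intro exI[of _ "Comp rf [r1, r2]"] allI impI)
    fix xs :: "nat list" assume "length xs = k"
    then show "eval_rf (Comp rf [r1, r2]) xs (F [G1 xs, G2 xs])"
      using r1 r2 rf by (intro eval_rf.comp[where ys = "[G1 xs, G2 xs]"]) (auto simp: less_Suc_eq)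
  qed
qed

lemma recfn_prim:
  assumes "recfn k F" "recfn (Suc (Suc k)) G"
  shows "recfn (Suc k) (\<lambda>xs. rec_nat (F (tl xs)) (\<lambda>i y. G (i # y # tl xs)) (hd xs))"
proof -
  obtain rf where rf: "\<forall>xs. length xs = k \<longrightarrow> eval_rf rf xs (F xs)" using assms(1) unfolding recfn_def by blast
  obtain rg where rg: "\<forall>xs. length xs = Suc (Suc k) \<longrightarrow> eval_rf rg xs (G xs)" using assms(2) unfolding recfn_def by blast
  have *: "eval_rf (Prim rf rg) (n # ys) (rec_nat (F ys) (\<lambda>i y. G (i # y # ys)) n)"
    if "length ys = k" for n ys
  proof (induction n)
    case 0 then show ?case using rf that by (auto intro: eval_rf.prim0)
  next
    case (Suc n) then show ?case using rg that by (auto intro: eval_rf.primS)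
  qed
  show ?thesis unfolding recfn_def
  proof (intro exI[of _ "Prim rf rg"] allI impI)
    fix xs :: "nat list" assume "length xs = Suc k"
    then obtain n ys where "xs = n # ys" "length ys = k" by (cases xs) auto
    then show "eval_rf (Prim rf rg) xs (rec_nat (F (tl xs)) (\<lambda>i y. G (i # y # tl xs)) (hd xs))"
      using * by simp
  qed
qed

lemma recfn_mn:
  assumes "recfn (Suc k) F" "\<And>xs. length xs = k \<Longrightarrow> \<exists>n. F (n # xs) = 0"
  shows "recfn k (\<lambda>xs. LEAST n. F (n # xs) = 0)"
proof -
  obtain rf where rf: "\<forall>xs. length xs = Suc k \<longrightarrow> eval_rf rf xs (F xs)" using assms(1) unfolding recfn_def by blast
  show ?thesis unfolding recfn_def
  proof (intro exI[of _ "Mn rf"] allI impI)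
    fix xs :: "nat list" assume len: "length xs = k"
    let ?n = "LEAST n. F (n # xs) = 0"
    have "F (?n # xs) = 0" using assms(2)[OF len] by (rule LeastI_ex)
    moreover have "\<forall>m < ?n. \<exists>y. eval_rf rf (m # xs) y \<and> 0 < y"
    proof (intro allI impI)
      fix m assume "m < ?n"
      then have "F (m # xs) \<noteq> 0" by (rule not_less_Least)
      moreover have "eval_rf rf (m # xs) (F (m # xs))" using rf len by simp
      ultimately show "\<exists>y. eval_rf rf (m # xs) y \<and> 0 < y" by blast
    qed
    moreover have "eval_rf rf (?n # xs) (F (?n # xs))" using rf len by simp
    ultimately show "eval_rf (Mn rf) xs ?n" by (intro eval_rf.mn) simp_all
  qed
qed

lemma recfn_2_cases: "length xs = 2 \<Longrightarrow> \<exists>a b. xs = [a, b]"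
  by (cases xs; cases "tl xs") auto

lemma rec_add: "rec_nat b (\<lambda>i y. Suc y) a = a + b" by (induct a) auto
lemma rec_mult: "rec_nat 0 (\<lambda>i y. y + b) a = a * b" by (induct a) auto
lemma rec_pred: "rec_nat 0 (\<lambda>i y. i) a = a - 1" by (induct a) auto
lemma rec_monus: "rec_nat b (\<lambda>i y. y - 1) a = b - a" by (induct a) auto
lemma rec_pow2: "rec_nat 1 (\<lambda>i y. y + y) a = (2::nat) ^ a" by (induct a) auto
lemma rec_monus': "rec_nat b (\<lambda>i y. y - Suc 0) a = b - a" by (induct a) auto
lemma rec_pow2': "rec_nat (Suc 0) (\<lambda>i y. y + y) a = (2::nat) ^ a" by (induct a) auto

lemma recfn_add0: "recfn 2 (\<lambda>xs. xs ! 0 + xs ! 1)"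
proof -
  have "recfn 2 (\<lambda>xs. rec_nat ((tl xs) ! 0) (\<lambda>i y. Suc ((i # y # tl xs) ! 1)) (hd xs))"
    using recfn_prim[of 1 "\<lambda>xs. xs ! 0" "\<lambda>zs. Suc (zs ! 1)"] recfn_proj recfn_succ
    by (simp add: numeral_2_eq_2)
  then show ?thesis
    by (rule recfn_cong) (auto dest!: recfn_2_cases simp: rec_add)
qed

lemma recfn_mult0: "recfn 2 (\<lambda>xs. xs ! 0 * xs ! 1)"
proof -
  have "recfn 2 (\<lambda>xs. rec_nat 0 (\<lambda>i y. (i # y # tl xs) ! 1 + (i # y # tl xs) ! 2) (hd xs))"
    using recfn_prim[of 1 "\<lambda>xs. 0" "\<lambda>zs. zs ! 1 + zs ! 2"] recfn_zero
       recfn_comp2[OF recfn_add0 recfn_proj[of 1 3] recfn_proj[of 2 3]]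
    by (simp add: numeral_2_eq_2 numeral_3_eq_3)
  then show ?thesis
    by (rule recfn_cong) (auto dest!: recfn_2_cases simp: rec_mult)
qed

lemma recfn_pred0: "recfn 1 (\<lambda>xs. xs ! 0 - 1)"
proof -
  have "recfn 1 (\<lambda>xs. rec_nat 0 (\<lambda>i y. (i # y # tl xs) ! 0) (hd xs))"
    using recfn_prim[of 0 "\<lambda>xs. 0" "\<lambda>zs. zs ! 0"] recfn_zero recfn_proj[of 0 2]
    by (simp add: numeral_2_eq_2)
  then show ?thesis
    by (rule recfn_cong) (auto simp: rec_pred length_Suc_conv)
qed

lemma recfn_monus0: "recfn 2 (\<lambda>xs. xs ! 1 - xs ! 0)"
proof -
  have "recfn 2 (\<lambda>xs. rec_nat ((tl xs) ! 0) (\<lambda>i y. (i # y # tl xs) ! 1 - 1) (hd xs))"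
    using recfn_prim[of 1 "\<lambda>xs. xs ! 0" "\<lambda>zs. zs ! 1 - 1"] recfn_proj
       recfn_comp1[OF recfn_pred0 recfn_proj[of 1 3]]
    by (simp add: numeral_2_eq_2 numeral_3_eq_3)
  then show ?thesis
    by (rule recfn_cong) (auto dest!: recfn_2_cases simp: rec_monus rec_monus')
qed

lemma recfn_pow20: "recfn 1 (\<lambda>xs. 2 ^ (xs ! 0))"
proof -
  have "recfn 1 (\<lambda>xs. rec_nat 1 (\<lambda>i y. (i # y # tl xs) ! 1 + (i # y # tl xs) ! 1) (hd xs))"
    using recfn_prim[of 0 "\<lambda>xs. 1" "\<lambda>zs. zs ! 1 + zs ! 1"] recfn_const
       recfn_comp2[OF recfn_add0 recfn_proj[of 1 2] recfn_proj[of 1 2]]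
    by (simp add: numeral_2_eq_2)
  then show ?thesis
    by (rule recfn_cong) (auto simp: rec_pow2 rec_pow2' length_Suc_conv)
qed

lemma recfn_add: "recfn k F \<Longrightarrow> recfn k G \<Longrightarrow> recfn k (\<lambda>xs. F xs + G xs)"
  using recfn_comp2[OF recfn_add0] by simp
lemma recfn_mult: "recfn k F \<Longrightarrow> recfn k G \<Longrightarrow> recfn k (\<lambda>xs. F xs * G xs)"
  using recfn_comp2[OF recfn_mult0] by simp
lemma recfn_minus: "recfn k F \<Longrightarrow> recfn k G \<Longrightarrow> recfn k (\<lambda>xs. F xs - G xs)"
  using recfn_comp2[OF recfn_monus0, of k G F] by simp
lemma recfn_pow2: "recfn k F \<Longrightarrow> recfn k (\<lambda>xs. 2 ^ F xs)"
  using recfn_comp1[OF recfn_pow20] by simp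

lemma computable_nat_recfn: "computable_nat f \<longleftrightarrow> recfn 1 (\<lambda>xs. f (xs ! 0))"
proof
  assume "computable_nat f"
  then obtain r where r: "\<And>n. eval_rf r [n] (f n)" unfolding computable_nat_def by blast
  have "eval_rf r xs (f (xs ! 0))" if "length xs = 1" for xs
  proof -
    obtain n where "xs = [n]" using \<open>length xs = 1\<close> by (cases xs) auto
    then show ?thesis using r by simp
  qed
  then show "recfn 1 (\<lambda>xs. f (xs ! 0))" unfolding recfn_def by blast
next
  assume "recfn 1 (\<lambda>xs. f (xs ! 0))"
  then obtain r where r: "\<And>xs. length xs = 1 \<Longrightarrow> eval_rf r xs (f (xs ! 0))" unfolding recfn_def by blast
  have "eval_rf r [n] (f n)" for n using r[of "[n]"] by simp
  then show "computable_nat f" unfolding computable_nat_def by blast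
qed

lemma recfn_app: "computable_nat f \<Longrightarrow> recfn k F \<Longrightarrow> recfn k (\<lambda>xs. f (F xs))"
proof -
  assume f: "computable_nat f" and F: "recfn k F"
  have "recfn 1 (\<lambda>xs. f (xs ! 0))" using f by (simp only: computable_nat_recfn)
  from recfn_comp1[OF this F] show ?thesis by simp
qed

lemma computable_natI: "recfn 1 (\<lambda>xs. f (xs ! 0)) \<Longrightarrow> computable_nat f"
  by (simp only: computable_nat_recfn)

lemma computable_nat_comp: "computable_nat f \<Longrightarrow> computable_nat g \<Longrightarrow> computable_nat (\<lambda>n. f (g n))"
proof -
  assume f: "computable_nat f" and g: "computable_nat g"
  have "recfn 1 (\<lambda>xs. g (xs ! 0))" using g by (simp only: computable_nat_recfn)
  then have "recfn 1 (\<lambda>xs. f (g (xs ! 0)))" by (rule recfn_app[OF f])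
  then show ?thesis by (simp only: computable_nat_recfn)
qed

lemma inf_nat_unb: "infinite (S::nat set) \<Longrightarrow> \<exists>n\<ge>m. n \<in> S"
proof (rule ccontr)
  assume inf: "infinite S" and "\<not> (\<exists>n\<ge>m. n \<in> S)"
  then have "S \<subseteq> {..<m}" by (auto simp: not_le)
  then show False using inf finite_subset by blast
qed


lemma pow_half_lim: "(\<lambda>n. 1 / 2 ^ n :: real) \<longlonglongrightarrow> 0"
  using LIMSEQ_realpow_zero[of "1/2::real"] by (simp add: power_one_over)

lemma ra_imp_speedable:
  assumes lc: "left_computable x" and ra: "regainingly_approximable x"
  shows "speedable x"
proof -
  obtain q where cq: "computable_rat_seq q" and mq: "mono q"
    and lim: "(\<lambda>n. real_of_rat (q n)) \<longlonglongrightarrow> x"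
    and inf: "infinite {n. x - real_of_rat (q n) < 1 / 2 ^ n}"
    using ra unfolding regainingly_approximable_def by blast
  obtain a b c where ca: "computable_nat a" and cb: "computable_nat b" and cc: "computable_nat c"
    and qeq: "\<And>n. q n = (of_nat (a n) - of_nat (b n)) / of_nat (Suc (c n))"
    using cq unfolding computable_rat_seq_def by blast
  define p where "p n = q n - 1 / 2 ^ n" for n
  have cp: "computable_rat_seq p"
    unfolding computable_rat_seq_def
  proof (intro exI conjI allI)
    show "computable_nat (\<lambda>n. a n * 2 ^ n)"
      by (rule computable_natI, rule recfn_mult, rule recfn_app[OF ca], rule recfn_proj, simp,
          rule recfn_pow2, rule recfn_proj, simp)
    show "computable_nat (\<lambda>n. b n * 2 ^ n + c n + 1)"
      by (rule computable_natI, intro recfn_add recfn_mult recfn_app[OF cb] recfn_app[OF cc]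
          recfn_pow2 recfn_proj recfn_const, auto)
    show "computable_nat (\<lambda>n. Suc (c n) * 2 ^ n - 1)"
      by (rule computable_natI, intro recfn_minus recfn_mult recfn_succ recfn_app[OF cc]
          recfn_pow2 recfn_proj recfn_const, auto)
    fix n
    have pos: "Suc (c n) * 2 ^ n \<ge> 1" by (simp add: Suc_le_eq)
    then have e: "Suc (Suc (c n) * 2 ^ n - 1) = Suc (c n) * 2 ^ n" by simp
    show "p n = (of_nat (a n * 2 ^ n) - of_nat (b n * 2 ^ n + c n + 1)) / of_nat (Suc (Suc (c n) * 2 ^ n - 1))"
      unfolding e p_def qeq by (simp add: field_simps)
  qed
  have smp: "strict_mono p"
    unfolding strict_mono_Suc_iff
  proof
    fix n
    have "q n \<le> q (Suc n)" using mq by (simp add: monoD)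
    moreover have "1 / 2 ^ Suc n < (1 / 2 ^ n :: rat)" by (simp add: field_simps)
    ultimately show "p n < p (Suc n)" unfolding p_def by simp
  qed
  define Q where "Q n = real_of_rat (q n)" for n
  define P where "P n = real_of_rat (p n)" for n
  have PQ: "P n = Q n - 1 / 2 ^ n" for n
    unfolding P_def Q_def p_def by (simp add: of_rat_diff of_rat_divide of_rat_power)
  have incQ: "incseq Q" unfolding Q_def using mq by (simp add: mono_def of_rat_less_eq)
  have limQ: "Q \<longlonglongrightarrow> x" using lim unfolding Q_def .
  have Qle: "Q n \<le> x" for n using incseq_le[OF incQ limQ] .
  have limP: "P \<longlonglongrightarrow> x"
    unfolding PQ using tendsto_diff[OF limQ pow_half_lim] by simp
  define e where "e n = x - P n" for n
  have epos: "e n > 0" for n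
  proof -
    have "0 < (1::real) / 2 ^ n" by simp
    then show ?thesis unfolding e_def PQ using Qle[of n] by linarith
  qed
  have "infinite {n. e (Suc n) / e n \<le> 3 / 4}"
  proof
    assume fin: "finite {n. e (Suc n) / e n \<le> 3 / 4}"
    then obtain m where m: "\<And>n. e (Suc n) / e n \<le> 3 / 4 \<Longrightarrow> n \<le> m"
      unfolding finite_nat_set_iff_bounded_le by blast
    define N where "N = Suc m"
    have step: "e (Suc n) > 3 / 4 * e n" if "n \<ge> N" for n
    proof -
      have "\<not> e (Suc n) / e n \<le> 3 / 4" using m[of n] that unfolding N_def by auto
      then show ?thesis using epos[of n] by (simp add: field_simps)
    qed
    have lower: "e (N + k) \<ge> (3 / 4) ^ k * e N" for k
    proof (induction k)
      case 0 then show ?case by simp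
    next
      case (Suc k)
      have "(3 / 4) ^ Suc k * e N = 3 / 4 * ((3 / 4) ^ k * e N)" by simp
      also have "\<dots> \<le> 3 / 4 * e (N + k)" using Suc by (rule mult_left_mono) auto
      also have "\<dots> \<le> e (N + Suc k)" using step[of "N + k"] by simp
      finally show ?case .
    qed
    obtain K where K: "2 / (2 ^ N * e N) < (3 / 2 :: real) ^ K"
      using real_arch_pow[of "3/2" "2 / (2 ^ N * e N)"] by auto
    obtain n where n: "n \<ge> N + K" "x - Q n < 1 / 2 ^ n"
      using inf_nat_unb[OF inf, of "N + K"] unfolding Q_def by blast
    define k where "k = n - N"
    have nk: "n = N + k" "k \<ge> K" using n unfolding k_def by auto
    have BA: "0 < 2 ^ N * e N" using epos[of N] by simp
    have C: "(0::real) < 2 ^ k" by simp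
    have "e n < 2 / 2 ^ n" unfolding e_def PQ using n(2) by simp
    then have h2: "e n < 2 / (2 ^ N * 2 ^ k)" unfolding nk by (simp add: power_add)
    have h1: "(3 / 4) ^ k * e N \<le> e n" using lower[of k] unfolding nk .
    have "(3 / 4) ^ k * e N < 2 / (2 ^ N * 2 ^ k)" using h1 h2 by linarith
    then have "(3 / 4) ^ k * e N * (2 ^ N * 2 ^ k) < 2"
      using C BA by (subst (asm) pos_less_divide_eq) auto
    moreover have "(3 / 4) ^ k * e N * (2 ^ N * 2 ^ k) = ((3 / 4) ^ k * 2 ^ k) * (2 ^ N * e N)"
      by (simp only: ac_simps)
    moreover have "(3 / 4) ^ k * 2 ^ k = ((3 / 2) ^ k :: real)"
      by (simp add: power_mult_distrib[symmetric])
    ultimately have h3: "(3 / 2) ^ k * (2 ^ N * e N) < 2" by simp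
    have h4: "2 < (3 / 2 :: real) ^ K * (2 ^ N * e N)"
      using K BA by (subst (asm) pos_divide_less_eq) auto
    have "(3 / 2 :: real) ^ K \<le> (3 / 2) ^ k"
      using nk(2) by (rule power_increasing) simp
    then have "(3 / 2 :: real) ^ K * (2 ^ N * e N) \<le> (3 / 2) ^ k * (2 ^ N * e N)"
      using mult_right_mono[OF _ less_imp_le[OF BA]] by blast
    then show False using h3 h4 by linarith
  qed
  then have "infinite {n. (x - real_of_rat (p (Suc n))) / (x - real_of_rat (p n)) \<le> 3 / 4}"
    unfolding e_def P_def .
  moreover have "(\<lambda>n. real_of_rat (p n)) \<longlonglongrightarrow> x" using limP unfolding P_def .
  ultimately have "0 < (3/4::real) \<and> (3/4::real) < 1 \<and> (computable_rat_seq p \<and> strict_mono p \<and>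
      (\<lambda>n. real_of_rat (p n)) \<longlonglongrightarrow> x \<and>
      infinite {n. (x - real_of_rat (p (Suc n))) / (x - real_of_rat (p n)) \<le> 3 / 4})"
    using cp smp by simp
  then show ?thesis unfolding speedable_def using lc by blast
qed


lemma rat_frac_real: "real_of_rat ((of_nat a - of_nat b) / of_nat (Suc c)) = (real a - real b) / real (Suc c)"
  by (simp add: of_rat_divide of_rat_diff of_rat_add)

lemma div_less_iff_aux: "0 < (B::real) \<Longrightarrow> 0 < C \<Longrightarrow> a / B < 1 / C \<longleftrightarrow> a * C < B"
  by (simp add: field_simps)

lemma absdiff_nat: "real ((P - N) + (N - P)) = \<bar>real P - real N\<bar>"
proof (cases "P \<le> N")
  case True
  then have "P - N = 0" by simp
  then show ?thesis using True by (simp add: of_nat_diff)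
next
  case False
  then have "N - P = 0" by simp
  then show ?thesis using False by (simp add: of_nat_diff)
qed

lemma frac_diff_aux:
  fixes a1 b1 a2 b2 s1 s2 :: real
  assumes "0 < s1" "0 < s2"
  shows "(a1 - b1) / s1 - (a2 - b2) / s2 = ((a1 * s2 + b2 * s1) - (b1 * s2 + a2 * s1)) / (s1 * s2)"
  using assms by (simp add: field_simps)

lemma rat_cond_iff:
  fixes a1 b1 c1 a2 b2 c2 j :: nat
  defines "P \<equiv> a1 * Suc c2 + b2 * Suc c1" and "N \<equiv> b1 * Suc c2 + a2 * Suc c1"
  shows "\<bar>real_of_rat ((of_nat a1 - of_nat b1) / of_nat (Suc c1)) -
            real_of_rat ((of_nat a2 - of_nat b2) / of_nat (Suc c2))\<bar> < 1 / 2 ^ j \<longleftrightarrow>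
         ((P - N) + (N - P)) * 2 ^ j < Suc c1 * Suc c2"
proof -
  have pos1: "0 < real (Suc c1)" and pos2: "0 < real (Suc c2)" by simp_all
  have PN: "real P = real a1 * real (Suc c2) + real b2 * real (Suc c1)"
       "real N = real b1 * real (Suc c2) + real a2 * real (Suc c1)"
    unfolding P_def N_def by (simp_all only: of_nat_add of_nat_mult)
  have d: "real_of_rat ((of_nat a1 - of_nat b1) / of_nat (Suc c1)) -
            real_of_rat ((of_nat a2 - of_nat b2) / of_nat (Suc c2))
        = (real P - real N) / (real (Suc c1) * real (Suc c2))"
    unfolding rat_frac_real PN by (rule frac_diff_aux[OF pos1 pos2])
  have pos: "0 < real (Suc c1) * real (Suc c2)" using pos1 pos2 by simp
  have "\<bar>(real P - real N) / (real (Suc c1) * real (Suc c2))\<bar> < 1 / 2 ^ j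
      \<longleftrightarrow> \<bar>real P - real N\<bar> / (real (Suc c1) * real (Suc c2)) < 1 / 2 ^ j"
    by (simp only: abs_divide abs_of_pos[OF pos])
  also have "\<dots> \<longleftrightarrow> \<bar>real P - real N\<bar> * 2 ^ j < real (Suc c1) * real (Suc c2)"
    by (rule div_less_iff_aux[OF pos]) simp
  also have "\<dots> \<longleftrightarrow> real (((P - N) + (N - P)) * 2 ^ j) < real (Suc c1 * Suc c2)"
    by (simp only: of_nat_mult absdiff_nat of_nat_power of_nat_numeral)
  also have "\<dots> \<longleftrightarrow> ((P - N) + (N - P)) * 2 ^ j < Suc c1 * Suc c2"
    by (rule of_nat_less_iff)
  finally show ?thesis unfolding d .
qed


lemma nat_one_minus_eq0: "(1::nat) - (R - L) = 0 \<longleftrightarrow> L < R" by arith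

lemma speedable_nc_imp_ra:
  assumes nc: "nearly_computable x" and sp: "speedable x"
  shows "regainingly_approximable x"
proof -
  obtain qy where cqy: "computable_rat_seq qy"
    and ncy: "converges_nearly_computably (\<lambda>n. real_of_rat (qy n))"
    and limy: "(\<lambda>n. real_of_rat (qy n)) \<longlonglongrightarrow> x"
    using nc unfolding nearly_computable_def by blast
  obtain a1 b1 c1 where ca1: "computable_nat a1" and cb1: "computable_nat b1" and cc1: "computable_nat c1"
    and qyeq: "\<And>n. qy n = (of_nat (a1 n) - of_nat (b1 n)) / of_nat (Suc (c1 n))"
    using cqy unfolding computable_rat_seq_def by blast
  obtain \<rho> :: real and q where rho: "0 < \<rho>" "\<rho> < 1" and cq: "computable_rat_seq q"
    and smq: "strict_mono q" and limq: "(\<lambda>n. real_of_rat (q n)) \<longlonglongrightarrow> x"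
    and infsp: "infinite {n. (x - real_of_rat (q (Suc n))) / (x - real_of_rat (q n)) \<le> \<rho>}"
    using sp unfolding speedable_def by blast
  obtain a2 b2 c2 where ca2: "computable_nat a2" and cb2: "computable_nat b2" and cc2: "computable_nat c2"
    and qeq: "\<And>n. q n = (of_nat (a2 n) - of_nat (b2 n)) / of_nat (Suc (c2 n))"
    using cq unfolding computable_rat_seq_def by blast
  define Y where "Y n = real_of_rat (qy n)" for n
  define Q where "Q n = real_of_rat (q n)" for n
  have limY: "Y \<longlonglongrightarrow> x" using limy unfolding Y_def .
  have limQ: "Q \<longlonglongrightarrow> x" using limq unfolding Q_def .
  have smQ: "strict_mono Q" using smq unfolding Q_def strict_mono_def by (simp add: of_rat_less)
  have monoQ: "mono Q" using smQ by (simp add: strict_mono_mono)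
  have Qle: "Q n \<le> x" for n using incseq_le[OF monoQ limQ] .
  have Qlt: "Q n < x" for n using smQ Qle[of "Suc n"] unfolding strict_mono_def by (meson lessI less_le_trans)
  define Pn where "Pn m = a1 m * Suc (c2 m) + b2 m * Suc (c1 m)" for m
  define Nn where "Nn m = b1 m * Suc (c2 m) + a2 m * Suc (c1 m)" for m
  define cond where "cond m j \<longleftrightarrow> ((Pn m - Nn m) + (Nn m - Pn m)) * 2 ^ j < Suc (c1 m) * Suc (c2 m)" for m j
  have cond_iff: "cond m j \<longleftrightarrow> \<bar>Y m - Q m\<bar> < 1 / 2 ^ j" for m j
    unfolding cond_def Y_def Q_def qyeq qeq Pn_def Nn_def by (rule rat_cond_iff[symmetric])
  define T where "T zs = 1 - (Suc (c1 (zs!2 + 1 + zs!0)) * Suc (c2 (zs!2 + 1 + zs!0))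
     - ((Pn (zs!2 + 1 + zs!0) - Nn (zs!2 + 1 + zs!0)) + (Nn (zs!2 + 1 + zs!0) - Pn (zs!2 + 1 + zs!0))) * 2 ^ (zs!1))"
    for zs :: "nat list"
  have T0: "T zs = 0 \<longleftrightarrow> cond (zs!2 + 1 + zs!0) (zs!1)" for zs
    unfolding T_def cond_def by (rule nat_one_minus_eq0)
  have exd: "\<exists>d. T [d, i, y] = 0" for i y
  proof -
    have "(\<lambda>m. Y m - Q m) \<longlonglongrightarrow> x - x" using tendsto_diff[OF limY limQ] .
    then have "(\<lambda>m. Y m - Q m) \<longlonglongrightarrow> 0" by simp
    moreover have "(0::real) < 1 / 2 ^ i" by simp
    ultimately obtain no where no: "\<And>m. m \<ge> no \<Longrightarrow> norm (Y m - Q m - 0) < 1 / 2 ^ i"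
      unfolding LIMSEQ_def dist_real_def by (metis real_norm_def)
    have "cond (y + 1 + no) i" unfolding cond_iff using no[of "y + 1 + no"] by simp
    then show ?thesis unfolding T0 by (intro exI[of _ no]) simp
  qed
  define sel where "sel i y = (LEAST d. T [d, i, y] = 0)" for i y
  define s where "s j = rec_nat 0 (\<lambda>i y. y + 1 + sel i y) j" for j
  have s0: "s 0 = 0" unfolding s_def by simp
  have sSuc: "s (Suc j) = s j + 1 + sel j (s j)" for j unfolding s_def by simp
  have sms: "strict_mono s" unfolding strict_mono_Suc_iff sSuc by simp
  have scond: "cond (s (Suc j)) j" for j
  proof -
    have "T [sel j (s j), j, s j] = 0" unfolding sel_def by (rule LeastI_ex[OF exd])
    then show ?thesis unfolding T0 sSuc by simp
  qed
  have scl: "\<bar>Y (s (Suc j)) - Q (s (Suc j))\<bar> < 1 / 2 ^ j" for j using scond[of j] cond_iff by blast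
  have rT: "recfn 3 T"
    unfolding T_def Pn_def Nn_def
    by (intro recfn_minus recfn_mult recfn_add recfn_succ recfn_pow2 recfn_app[OF ca1] recfn_app[OF cb1]
        recfn_app[OF cc1] recfn_app[OF ca2] recfn_app[OF cb2] recfn_app[OF cc2] recfn_proj recfn_const; simp)
  have rM: "recfn 2 (\<lambda>xs. LEAST n. T (n # xs) = 0)"
  proof (rule recfn_mn)
    show "recfn (Suc 2) T" using rT by (simp add: numeral_3_eq_3)
    fix xs :: "nat list" assume "length xs = 2"
    then obtain i y where "xs = [i, y]" using recfn_2_cases by blast
    then show "\<exists>n. T (n # xs) = 0" using exd by simp
  qed
  have rG: "recfn 2 (\<lambda>zs. zs!1 + 1 + (LEAST n. T (n # zs) = 0))"
    by (intro recfn_add recfn_proj recfn_const rM) simp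
  have "recfn (Suc 0) (\<lambda>xs. rec_nat ((\<lambda>_. 0) (tl xs))
      (\<lambda>i y. (\<lambda>zs. zs!1 + 1 + (LEAST n. T (n # zs) = 0)) (i # y # tl xs)) (hd xs))"
    by (rule recfn_prim[OF recfn_zero]) (use rG in \<open>simp add: numeral_2_eq_2\<close>)
  then have "recfn (Suc 0) (\<lambda>xs. s (xs ! 0))"
  proof (rule recfn_cong)
    fix xs :: "nat list" assume "length xs = Suc 0"
    then obtain n where "xs = [n]" by (cases xs) auto
    then show "rec_nat 0 (\<lambda>i y. (i # y # tl xs) ! 1 + 1 + (LEAST n. T (n # i # y # tl xs) = 0)) (hd xs) = s (xs ! 0)"
      by (simp add: s_def sel_def)
  qed
  then have cs: "computable_nat s" by (intro computable_natI) simp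
  have "converges_computably_to (\<lambda>n. Y (s (Suc n)) - Y (s n)) 0"
    using ncy cs sms unfolding converges_nearly_computably_def Y_def by blast
  then obtain f where cf: "computable_nat f"
    and modf: "\<And>k j. j \<ge> f k \<Longrightarrow> \<bar>0 - (Y (s (Suc j)) - Y (s j))\<bar> < 1 / 2 ^ k"
    unfolding converges_computably_to_def is_modulus_def by blast
  have rho1: "0 < 1 - \<rho>" using rho by simp
  obtain c :: nat where c: "4 / (1 - \<rho>) < 2 ^ c" using real_arch_pow[of 2 "4 / (1 - \<rho>)"] by auto
  have c4: "4 < (1 - \<rho>) * 2 ^ c" using c rho1 by (simp add: pos_divide_less_eq mult.commute)
  define H where "H m = rec_nat (f (c + 1) + c + 1) (\<lambda>i y. y + f (Suc i + c + 1) + 1) m" for m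
  have H0: "H 0 = f (c + 1) + c + 1" unfolding H_def by simp
  have HSuc: "H (Suc m) = H m + f (Suc m + c + 1) + 1" for m unfolding H_def by simp
  have Hge: "f (m + c + 1) \<le> H m \<and> m + c + 1 \<le> H m" for m
    by (induction m) (auto simp: H0 HSuc)
  have smH: "strict_mono H" unfolding strict_mono_Suc_iff HSuc by simp
  have rF: "recfn 0 (\<lambda>_. f (c + 1) + c + 1)"
    by (intro recfn_add recfn_app[OF cf] recfn_const)
  have rGH: "recfn 2 (\<lambda>zs. zs ! 1 + f (Suc (zs ! 0) + c + 1) + 1)"
    by (intro recfn_add recfn_app[OF cf] recfn_succ recfn_proj recfn_const; simp)
  have "recfn (Suc 0) (\<lambda>xs. rec_nat ((\<lambda>_. f (c + 1) + c + 1) (tl xs))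
      (\<lambda>i y. (\<lambda>zs. zs ! 1 + f (Suc (zs ! 0) + c + 1) + 1) (i # y # tl xs)) (hd xs))"
    by (rule recfn_prim[OF rF]) (use rGH in \<open>simp add: numeral_2_eq_2\<close>)
  then have "recfn (Suc 0) (\<lambda>xs. H (xs ! 0))"
  proof (rule recfn_cong)
    fix xs :: "nat list" assume "length xs = Suc 0"
    then obtain n where "xs = [n]" by (cases xs) auto
    then show "rec_nat (f (c + 1) + c + 1) (\<lambda>i y. (i # y # tl xs) ! 1 + f (Suc ((i # y # tl xs) ! 0) + c + 1) + 1) (hd xs) = H (xs ! 0)"
      by (simp add: H_def)
  qed
  then have cH: "computable_nat H" by (intro computable_natI) simp
  define idx where "idx m = s (Suc (H m))" for m
  have cidx: "computable_nat idx"
    unfolding idx_def by (intro computable_natI recfn_app[OF cs] recfn_succ recfn_app[OF cH] recfn_proj) simp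
  have smidx: "strict_mono idx"
    using sms smH unfolding strict_mono_def idx_def by simp
  define r where "r m = q (idx m)" for m
  have cr: "computable_rat_seq r"
    unfolding computable_rat_seq_def r_def qeq
    by (intro exI[of _ "\<lambda>m. a2 (idx m)"] exI[of _ "\<lambda>m. b2 (idx m)"] exI[of _ "\<lambda>m. c2 (idx m)"] conjI
        computable_nat_comp[OF ca2 cidx] computable_nat_comp[OF cb2 cidx] computable_nat_comp[OF cc2 cidx]) simp
  have mr: "mono r"
    unfolding r_def using strict_mono_mono[OF smq] strict_mono_mono[OF smidx] by (simp add: mono_def)
  have Qr: "real_of_rat (r m) = Q (idx m)" for m unfolding r_def Q_def ..
  have limr: "(\<lambda>m. real_of_rat (r m)) \<longlonglongrightarrow> x"
    using LIMSEQ_subseq_LIMSEQ[OF limQ smidx] unfolding Qr by (simp add: o_def)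
  have "infinite {m. x - real_of_rat (r m) < 1 / 2 ^ m}"
  proof
    assume fin: "finite {m. x - real_of_rat (r m) < 1 / 2 ^ m}"
    then obtain m0 where m0: "\<And>m. x - real_of_rat (r m) < 1 / 2 ^ m \<Longrightarrow> m \<le> m0"
      unfolding finite_nat_set_iff_bounded_le by blast
    define M where "M = Suc m0"
    have notgood: "1 / 2 ^ mm \<le> x - Q (idx mm)" if "M \<le> mm" for mm
      using m0[of mm] that unfolding M_def Qr by force
    obtain n where n: "n \<ge> s (Suc (H M))" "(x - Q (Suc n)) / (x - Q n) \<le> \<rho>"
      using inf_nat_unb[OF infsp, of "s (Suc (H M))"] unfolding Q_def by blast
    have ex_j: "\<exists>j. n < s (Suc j)" using seq_suble[OF sms, of "Suc n"] by (metis Suc_le_eq)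
    define j where "j = (LEAST j. n < s (Suc j))"
    have j1: "n < s (Suc j)" unfolding j_def by (rule LeastI_ex[OF ex_j])
    have j2: "s j \<le> n"
    proof (cases j)
      case 0 then show ?thesis using s0 by simp
    next
      case (Suc j')
      then have "j' < j" by simp
      then have "\<not> n < s (Suc j')" unfolding j_def by (rule not_less_Least)
      then show ?thesis using Suc by simp
    qed
    have jH: "H M < j"
    proof (rule ccontr)
      assume "\<not> H M < j"
      then have "Suc j \<le> Suc (H M)" by simp
      then have "s (Suc j) \<le> s (Suc (H M))" using strict_mono_less_eq[OF sms] by blast
      then show False using j1 n(1) by simp
    qed
    have ex_m: "\<exists>mm. j \<le> H mm" using Hge[of j] by (intro exI[of _ j]) simp
    define m where "m = (LEAST mm. j \<le> H mm)"
    have m1: "j \<le> H m" unfolding m_def by (rule LeastI_ex[OF ex_m])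
    have mM: "M < m"
    proof (rule ccontr)
      assume "\<not> M < m"
      then have "H m \<le> H M" using strict_mono_less_eq[OF smH] by simp
      then show False using m1 jH by simp
    qed
    then obtain m' where m': "m = Suc m'" by (cases m) auto
    have "m' < m" using m' by simp
    then have "\<not> j \<le> H m'" unfolding m_def by (rule not_less_Least)
    then have jf: "f (m + c) \<le> j" and jMc: "m + c + 1 \<le> j" using Hge[of m'] unfolding m' by auto
    then obtain j' where j': "j = Suc j'" by (cases j) auto
    have q1: "Q (s (Suc j)) \<le> Q (idx m)"
      using monoD[OF monoQ] strict_mono_less_eq[OF sms] m1 unfolding idx_def by simp
    have q2: "Q (Suc n) \<le> Q (s (Suc j))" using monoD[OF monoQ] j1 by simp
    have q3: "Q (s j) \<le> Q n" using monoD[OF monoQ j2] .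
    have Qinc: "Q n \<le> Q (Suc n)" using monoD[OF monoQ] by simp
    have xQ: "0 < x - Q n" using Qlt[of n] by simp
    have sp1: "x - Q (Suc n) \<le> \<rho> * (x - Q n)" using n(2) xQ by (simp add: pos_divide_le_eq mult.commute)
    have e1: "\<rho> * (x - Q n) = \<rho> * (x - Q (Suc n)) + \<rho> * (Q (Suc n) - Q n)" by (simp add: algebra_simps)
    have e2: "(1 - \<rho>) * (x - Q (Suc n)) = (x - Q (Suc n)) - \<rho> * (x - Q (Suc n))" by (simp add: algebra_simps)
    have e3: "\<rho> * (Q (Suc n) - Q n) \<le> Q (Suc n) - Q n"
      using rho Qinc by (intro mult_left_le_one_le) auto
    have e4: "(1 - \<rho>) * (x - Q (s (Suc j))) \<le> (1 - \<rho>) * (x - Q (Suc n))"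
      by (rule mult_left_mono) (use rho1 q2 in auto)
    have key1: "(1 - \<rho>) * (x - Q (s (Suc j))) \<le> Q (s (Suc j)) - Q (s j)"
      using sp1 e1 e2 e3 e4 q2 q3 by linarith
    have yb: "\<bar>Y (s (Suc j)) - Y (s j)\<bar> < 1 / 2 ^ (m + c)" using modf[OF jf] by simp
    have cl1: "\<bar>Y (s (Suc j)) - Q (s (Suc j))\<bar> < 1 / 2 ^ j" using scl[of j] .
    have cl2: "\<bar>Y (s j) - Q (s j)\<bar> < 2 / 2 ^ j" using scl[of j'] unfolding j' by simp
    have pw: "(2::real) ^ (m + c) \<le> 2 ^ j" using jMc by (intro power_increasing) auto
    have pj: "1 / 2 ^ j \<le> (1::real) / 2 ^ (m + c)"
      using pw by (intro divide_left_mono) auto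
    have D: "Q (s (Suc j)) - Q (s j) < 4 / 2 ^ (m + c)"
    proof -
      have "Q (s (Suc j)) - Q (s j) \<le> \<bar>Y (s (Suc j)) - Y (s j)\<bar> + \<bar>Y (s (Suc j)) - Q (s (Suc j))\<bar> + \<bar>Y (s j) - Q (s j)\<bar>"
        by linarith
      also have "\<dots> < 1 / 2 ^ (m + c) + 1 / 2 ^ j + 2 / 2 ^ j" using yb cl1 cl2 by linarith
      also have "\<dots> = 1 / 2 ^ (m + c) + 3 * (1 / 2 ^ j)" by simp
      also have "\<dots> \<le> 1 / 2 ^ (m + c) + 3 * (1 / 2 ^ (m + c))" using pj by linarith
      also have "\<dots> = 4 / 2 ^ (m + c)" by simp
      finally show ?thesis .
    qed
    have "(1 - \<rho>) * (1 / 2 ^ m) \<le> (1 - \<rho>) * (x - Q (idx m))"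
      by (rule mult_left_mono) (use rho1 notgood[of m] mM in auto)
    also have "\<dots> \<le> (1 - \<rho>) * (x - Q (s (Suc j)))"
      by (rule mult_left_mono) (use rho1 q1 in auto)
    also have "\<dots> < 4 / 2 ^ (m + c)" using key1 D by linarith
    finally have "(1 - \<rho>) * (1 / 2 ^ m) < 4 / (2 ^ m * 2 ^ c)" by (simp add: power_add)
    then have X: "(1 - \<rho>) * (1 / 2 ^ m) * (2 ^ m * 2 ^ c) < 4 / (2 ^ m * 2 ^ c) * (2 ^ m * 2 ^ c)"
      by (rule mult_strict_right_mono) simp
    have X1: "(1 - \<rho>) * (1 / 2 ^ m) * (2 ^ m * 2 ^ c) = (1 - \<rho>) * (2::real) ^ c" by simp
    have X2: "4 / (2 ^ m * 2 ^ c) * (2 ^ m * 2 ^ c) = (4::real)" by simp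
    have "(1 - \<rho>) * 2 ^ c < 4" using X X1 X2 by linarith
    then show False using c4 by linarith
  qed
  then show ?thesis unfolding regainingly_approximable_def using cr mr limr by blast
qed


theorem corollary5p9:
  fixes x :: real
  assumes "left_computable x"
    and "nearly_computable x"
  shows "regainingly_approximable x \<longleftrightarrow> speedable x"
  using ra_imp_speedable[OF assms(1)] speedable_nc_imp_ra[OF assms(2)] by blast

end
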